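(* Suppose the reward-free MDP $M$ has low-rank structure: for all $h$, $P^M_{h-1}(x_h\mid x_{h-1},a_{h-1})=\langle\phi_{h-1}(x_{h-1},a_{h-1}),\psi_h(x_h)\rangle$ for feature maps $\phi_{h-1}(x,a),\psi_h(x)\in\mathbb{R}^d$. Let $\Pi\subseteq\Pi_{\mathrm{RNS}}$. Then for all $h\in[H]$, $C^M_{1;h}\le|\mathcal{A}|\cdot C^M_{\mathrm{feat};h-1}$, and consequently, for all $\varepsilon>0$, $$\mathsf{Cov}^M_{h,\varepsilon}\le 1+2\sqrt{\frac{|\mathcal{A}|\cdot C^M_{\mathrm{feat};h-1}}{\varepsilon}}.$$
   Context: Episodic reward-free MDP $M$ (countable $\mathcal{X}$, actions $\mathcal{A}$, horizon $H$, transitions $P^M_h$); $\Pi_{\mathrm{RNS}}$ randomized non-stationary policies; $d^{M,\pi}_h(x,a)$ layer-$h$ occupancy, $d^{M,p}_h=\mathbb{E}_{\pi\sim p}d^{M,\pi}_h$. Definitions: $\Psi^M_{h,\varepsilon}(p)=\sup_{\pi\in\Pi}\mathbb{E}^{M,\pi}\big[\frac{d^{M,\pi}_h(x_h,a_h)}{d^{M,p}_h(x_h,a_h)+\varepsilon d^{M,\pi}_h(x_h,a_h)}\big]$; $\mathsf{Cov}^M_{h,\varepsilon}=\inf_{p\in\Delta(\Pi)}\Psi^M_{h,\varepsilon}(p)$; $C^M_{1;h}=\inf_{\mu\in\Delta(\mathcal{X}\times\mathcal{A})}\sup_{\pi\in\Pi}\mathbb{E}^{M,\pi}\big[\frac{d^{M,\pi}_h(x_h,a_h)}{\mu(x_h,a_h)}\big]$;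 feature coverability $C^M_{\mathrm{feat};h}=\inf_{\mu\in\Delta(\mathcal{X}\times\mathcal{A})}\sup_{\pi\in\Pi}\big\|\mathbb{E}^{M,\pi}[\phi_h(x_h,a_h)]\big\|^2_{\Sigma_\mu^{-1}}$ where $\Sigma_\mu=\mathbb{E}_{(x,a)\sim\mu}[\phi_h(x,a)\phi_h(x,a)^\top]$. *)

theory Defs
  imports "HOL-Analysis.Analysis" "HOL-Probability.Probability"
begin

text \<open>Episodic reward-free MDP with countable state type 'x, finite action type 'a,
  initial state distribution rho (layer 1) and transition kernels P h x a (from layer h
  to layer h+1).  Layers are numbered 1, 2, ..., H.\<close>

type_synonym ('x,'a) policy = "nat \<Rightarrow> 'x \<Rightarrow> 'a pmf"
  \<comment> \<open>randomized non-stationary (Markov) policy: pi h x is the action distribution at layer h\<close>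

fun state_dist :: "'x pmf \<Rightarrow> (nat \<Rightarrow> 'x \<Rightarrow> 'a \<Rightarrow> 'x pmf) \<Rightarrow> ('x,'a) policy \<Rightarrow> nat \<Rightarrow> 'x pmf" where
  "state_dist \<rho> P \<pi> 0 = \<rho>"   \<comment> \<open>layer 0 unused\<close>
| "state_dist \<rho> P \<pi> (Suc 0) = \<rho>"
| "state_dist \<rho> P \<pi> (Suc (Suc h)) =
     bind_pmf (state_dist \<rho> P \<pi> (Suc h)) (\<lambda>x. bind_pmf (\<pi> (Suc h) x) (\<lambda>a. P (Suc h) x a))"

definition occ :: "'x pmf \<Rightarrow> (nat \<Rightarrow> 'x \<Rightarrow> 'a \<Rightarrow> 'x pmf) \<Rightarrow> ('x,'a) policy \<Rightarrow> nat \<Rightarrow> ('x \<times> 'a) pmf" where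
  "occ \<rho> P \<pi> h = bind_pmf (state_dist \<rho> P \<pi> h) (\<lambda>x. map_pmf (\<lambda>a. (x, a)) (\<pi> h x))"

definition occ_mix :: "'x pmf \<Rightarrow> (nat \<Rightarrow> 'x \<Rightarrow> 'a \<Rightarrow> 'x pmf) \<Rightarrow> ('x,'a) policy pmf \<Rightarrow> nat \<Rightarrow> ('x \<times> 'a) pmf" where
  "occ_mix \<rho> P p h = bind_pmf p (\<lambda>\<pi>. occ \<rho> P \<pi> h)"

definition Psi :: "'x pmf \<Rightarrow> (nat \<Rightarrow> 'x \<Rightarrow> 'a \<Rightarrow> 'x pmf) \<Rightarrow> ('x,'a) policy set \<Rightarrow> nat \<Rightarrow> real
                    \<Rightarrow> ('x,'a) policy pmf \<Rightarrow> ennreal" where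
  "Psi \<rho> P Pols h \<epsilon> p = (SUP \<pi>\<in>Pols. \<integral>\<^sup>+ z. ennreal (pmf (occ \<rho> P \<pi> h) z /
        (pmf (occ_mix \<rho> P p h) z + \<epsilon> * pmf (occ \<rho> P \<pi> h) z)) \<partial>measure_pmf (occ \<rho> P \<pi> h))"

definition Cov :: "'x pmf \<Rightarrow> (nat \<Rightarrow> 'x \<Rightarrow> 'a \<Rightarrow> 'x pmf) \<Rightarrow> ('x,'a) policy set \<Rightarrow> nat \<Rightarrow> real \<Rightarrow> ennreal" where
  "Cov \<rho> P Pols h \<epsilon> = (INF p\<in>{p. set_pmf p \<subseteq> Pols}. Psi \<rho> P Pols h \<epsilon> p)"

text \<open>C^M_{1;h}; the ratio is taken in ennreal, so a/0 = \<infinity> for a > 0\<close>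
definition C1 :: "'x pmf \<Rightarrow> (nat \<Rightarrow> 'x \<Rightarrow> 'a \<Rightarrow> 'x pmf) \<Rightarrow> ('x,'a) policy set \<Rightarrow> nat \<Rightarrow> ennreal" where
  "C1 \<rho> P Pols h = (INF \<mu>\<in>(UNIV :: ('x \<times> 'a) pmf set). SUP \<pi>\<in>Pols.
      \<integral>\<^sup>+ z. ennreal (pmf (occ \<rho> P \<pi> h) z) / ennreal (pmf \<mu> z) \<partial>measure_pmf (occ \<rho> P \<pi> h))"

definition feat_cov :: "('x \<times> 'a) pmf \<Rightarrow> ('x \<Rightarrow> 'a \<Rightarrow> real^'d) \<Rightarrow> real^'d^'d" where
  "feat_cov \<mu> \<phi> = (\<integral> z. (\<chi> i j. \<phi> (fst z) (snd z) $ i * \<phi> (fst z) (snd z) $ j) \<partial>measure_pmf \<mu>)"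

definition feat_cov_ok :: "('x \<times> 'a) pmf \<Rightarrow> ('x \<Rightarrow> 'a \<Rightarrow> real^'d) \<Rightarrow> bool" where
  "feat_cov_ok \<mu> \<phi> \<longleftrightarrow>
     integrable (measure_pmf \<mu>) (\<lambda>z. (\<chi> i j. \<phi> (fst z) (snd z) $ i * \<phi> (fst z) (snd z) $ j) :: real^'d^'d)
     \<and> invertible (feat_cov \<mu> \<phi>)"

definition feat_norm :: "'x pmf \<Rightarrow> (nat \<Rightarrow> 'x \<Rightarrow> 'a \<Rightarrow> 'x pmf) \<Rightarrow> (nat \<Rightarrow> 'x \<Rightarrow> 'a \<Rightarrow> real^'d)
                          \<Rightarrow> nat \<Rightarrow> ('x \<times> 'a) pmf \<Rightarrow> ('x,'a) policy \<Rightarrow> ennreal" where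
  "feat_norm \<rho> P \<phi> h \<mu> \<pi> =
     (if integrable (measure_pmf (occ \<rho> P \<pi> h)) (\<lambda>z. \<phi> h (fst z) (snd z))
      then (let v = (\<integral> z. \<phi> h (fst z) (snd z) \<partial>measure_pmf (occ \<rho> P \<pi> h))
            in ennreal (v \<bullet> (matrix_inv (feat_cov \<mu> (\<phi> h)) *v v)))
      else \<top>)"

definition Cfeat :: "'x pmf \<Rightarrow> (nat \<Rightarrow> 'x \<Rightarrow> 'a \<Rightarrow> 'x pmf) \<Rightarrow> ('x,'a) policy set
                      \<Rightarrow> (nat \<Rightarrow> 'x \<Rightarrow> 'a \<Rightarrow> real^'d) \<Rightarrow> nat \<Rightarrow> ennreal" where
  "Cfeat \<rho> P Pols \<phi> h = (INF \<mu>\<in>{\<mu>. feat_cov_ok \<mu> (\<phi> h)}. SUP \<pi>\<in>Pols. feat_norm \<rho> P \<phi> h \<mu> \<pi>)"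

end

theory Submission
  imports Defs
begin


lemma finite_approx_pmf:
  fixes \<mu> :: "'z pmf"
  assumes "\<tau> > 0"
  shows "\<exists>Z0. finite Z0 \<and> Z0 \<subseteq> set_pmf \<mu> \<and> measure_pmf.prob \<mu> (- Z0) \<le> \<tau>"
proof -
  let ?S = "set_pmf \<mu>"
  have ne: "?S \<noteq> {}" by (rule set_pmf_not_empty)
  have cnt: "countable ?S" by simp
  define F where "F n = from_nat_into ?S ` {..<n}" for n
  have inc: "incseq F" unfolding F_def incseq_def by auto
  have U: "(\<Union>n. F n) = ?S"
    using range_from_nat_into[OF ne cnt] unfolding F_def by auto
  have "(\<lambda>n. measure_pmf.prob \<mu> (F n)) \<longlonglongrightarrow> measure_pmf.prob \<mu> (\<Union>n. F n)"
    by (rule measure_pmf.finite_Lim_measure_incseq) (auto simp: inc)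
  hence lim: "(\<lambda>n. measure_pmf.prob \<mu> (F n)) \<longlonglongrightarrow> 1"
    using U measure_Int_set_pmf[of \<mu> UNIV] by (simp add: measure_pmf.prob_space)
  then obtain n where n: "measure_pmf.prob \<mu> (F n) > 1 - \<tau>"
  proof -
    have "\<forall>\<^sub>F x in sequentially. 1 - \<tau> < measure_pmf.prob \<mu> (F x)"
      using assms order_tendstoD(1)[OF lim, of "1 - \<tau>"] by simp
    then obtain n where "1 - \<tau> < measure_pmf.prob \<mu> (F n)" using eventually_sequentially by auto
    thus ?thesis using that by blast
  qed
  have sub: "F n \<subseteq> ?S" using range_from_nat_into_subset[OF ne] unfolding F_def by auto
  have "measure_pmf.prob \<mu> (- F n) = 1 - measure_pmf.prob \<mu> (F n)"
    using measure_pmf.prob_compl[of "F n" \<mu>] by (simp add: Compl_eq_Diff_UNIV)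
  thus ?thesis using n sub unfolding F_def by (intro exI[of _ "F n"]) (auto simp: F_def)
qed



lemma ln_ge_one_minus_inv: "x > 0 \<Longrightarrow> ln (x::real) \<ge> 1 - 1/x"
proof -
  assume x: "x > 0"
  have "ln (1/x) \<le> 1/x - 1" using x by (intro ln_le_minus_one) auto
  thus ?thesis using x by (simp add: ln_div)
qed

lemma step_real:
  fixes D a c \<eta> \<epsilon> :: real
  assumes "0 \<le> D" "0 \<le> a" "0 < c" "0 < \<eta>" "\<eta> \<le> 1/2" "\<eta> \<le> \<epsilon>"
  shows "ln ((1-\<eta>)*D + \<eta>*a + c) - ln (D+c) \<ge> -2*\<eta> + \<eta>*a/(D+c+\<epsilon>*a)"
proof -
  define t where "t = a/(D+c)"
  have Dc: "D + c > 0" using assms by simp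
  have t0: "t \<ge> 0" using assms unfolding t_def by simp
  have ta: "(D+c)*t = a" using Dc unfolding t_def by simp
  have X: "(1-\<eta>)*(D+c)*(1+\<eta>*t) \<le> (1-\<eta>)*D + \<eta>*a + c"
  proof -
    have "(1-\<eta>)*(D+c)*(1+\<eta>*t) = (1-\<eta>)*(D+c) + (1-\<eta>)*\<eta>*a"
      by (subst ta[symmetric]) (simp add: algebra_simps)
    also have "\<dots> \<le> (1-\<eta>)*D + \<eta>*a + c"
      using assms by (simp add: algebra_simps mult_nonneg_nonneg)
    finally show ?thesis .
  qed
  have pos1: "1 - \<eta> > 0" using assms by simp
  have pos2: "1 + \<eta>*t > 0" using assms t0 by (simp add: add_pos_nonneg)
  have "ln ((1-\<eta>)*(D+c)*(1+\<eta>*t)) \<le> ln ((1-\<eta>)*D + \<eta>*a + c)"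
    using X pos1 pos2 Dc by (intro ln_mono) auto
  moreover have "ln ((1-\<eta>)*(D+c)*(1+\<eta>*t)) = ln (1-\<eta>) + ln (D+c) + ln (1+\<eta>*t)"
    using pos1 pos2 Dc by (simp add: ln_mult)
  moreover have "ln (1-\<eta>) \<ge> -2*\<eta>"
  proof -
    have "ln (1-\<eta>) \<ge> 1 - 1/(1-\<eta>)" using pos1 by (rule ln_ge_one_minus_inv)
    moreover have "1 - 1/(1-\<eta>) \<ge> -2*\<eta>"
      using assms pos1 by (simp add: field_simps)
    ultimately show ?thesis by linarith
  qed
  moreover have "ln (1+\<eta>*t) \<ge> \<eta>*a/(D+c+\<epsilon>*a)"
  proof -
    have "ln (1+\<eta>*t) \<ge> 1 - 1/(1+\<eta>*t)" using pos2 by (rule ln_ge_one_minus_inv)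
    moreover have "1 - 1/(1+\<eta>*t) = \<eta>*a/(D+c+\<eta>*a)"
      using pos2 Dc unfolding t_def by (simp add: field_simps)
    moreover have "\<eta>*a/(D+c+\<eta>*a) \<ge> \<eta>*a/(D+c+\<epsilon>*a)"
    proof (rule divide_left_mono)
      show "D + c + \<eta> * a \<le> D + c + \<epsilon> * a" using assms by (simp add: mult_right_mono)
      show "0 \<le> \<eta> * a" using assms by simp
      have "0 < D + c + \<epsilon> * a" using assms Dc by (metis add_pos_nonneg mult_nonneg_nonneg order_trans less_imp_le)
      moreover have "0 < D + c + \<eta> * a" using assms Dc by (metis add_pos_nonneg mult_nonneg_nonneg less_imp_le)
      ultimately show "0 < (D + c + \<epsilon> * a) * (D + c + \<eta> * a)" by simp
    qed
    ultimately show ?thesis by linarith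
  qed
  ultimately show ?thesis by linarith
qed



lemma pw_real:
  fixes a D m \<theta> \<epsilon> lam :: real
  assumes a: "0 \<le> a" and D: "0 \<le> D" and m: "0 < m" and th: "0 < \<theta>" and e: "0 < \<epsilon>" and l: "0 < lam"
  shows "a*(a/(D+\<epsilon>*a)) \<le> lam/2*(a*(a/m)) + m*(a/(D+\<theta>*m+\<epsilon>*a))/(2*lam*\<epsilon>) + \<theta>*m/\<epsilon>^2"
proof (cases "a = 0")
  case True
  thus ?thesis using m th e l by simp
next
  case False
  hence a: "a > 0" using a by simp
  define c where "c = \<theta>*m"
  have c: "c > 0" using th m unfolding c_def by simp
  define y where "y = a/(D+c+\<epsilon>*a)"
  have ea: "\<epsilon>*a > 0" using e a by simp
  have d1: "D + \<epsilon>*a \<ge> \<epsilon>*a" using D by simp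
  have d2: "D + c + \<epsilon>*a \<ge> \<epsilon>*a" using D c by simp
  have y0: "y \<ge> 0" using a D c e unfolding y_def by simp
  have y1: "y \<le> 1/\<epsilon>"
  proof -
    have "y \<le> a/(\<epsilon>*a)" unfolding y_def using a ea d2 by (intro divide_left_mono) auto
    thus ?thesis using a by simp
  qed
  have s1: "a*(a/(D+\<epsilon>*a)) - a*y \<le> c/\<epsilon>^2"
  proof -
    have "a*(a/(D+\<epsilon>*a)) - a*y = a*a*c/((D+\<epsilon>*a)*(D+c+\<epsilon>*a))"
      unfolding y_def using ea d1 d2 by (simp add: field_simps)
    also have "\<dots> \<le> a*a*c/((\<epsilon>*a)*(\<epsilon>*a))"
      using ea d1 d2 a c e by (intro divide_left_mono mult_mono mult_pos_pos) (auto simp: add_pos_nonneg add_nonneg_pos)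
    also have "\<dots> = c/\<epsilon>^2" using a e by (simp add: field_simps power2_eq_square)
    finally show ?thesis .
  qed
  have s2: "a*y \<le> lam/2*(a*(a/m)) + m*y^2/(2*lam)"
  proof -
    have "0 \<le> (lam*a - m*y)^2/(2*lam*m)" using l m by simp
    also have "(lam*a - m*y)^2/(2*lam*m) = lam/2*(a*(a/m)) + m*y^2/(2*lam) - a*y"
      using l m by (simp add: field_simps power2_eq_square)
    finally show ?thesis by simp
  qed
  have s3: "m*y^2/(2*lam) \<le> m*y/(2*lam*\<epsilon>)"
  proof -
    have "y^2 \<le> y*(1/\<epsilon>)" unfolding power2_eq_square using y0 y1 by (intro mult_left_mono) auto
    hence "m*y^2 \<le> m*(y*(1/\<epsilon>))" using m by (intro mult_left_mono) auto
    hence "m*y^2 \<le> m*y/\<epsilon>" by simp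
    hence "m*y^2/(2*lam) \<le> (m*y/\<epsilon>)/(2*lam)" using l by (intro divide_right_mono) auto
    thus ?thesis by (simp add: field_simps)
  qed
  show ?thesis using s1 s2 s3 unfolding c_def y_def by (simp add: algebra_simps)
qed



lemma pw_tail:
  fixes a D m \<epsilon> lam :: real
  assumes a: "0 \<le> a" and D: "0 \<le> D" and m: "0 \<le> m" and e: "0 < \<epsilon>" and l: "0 < lam"
  shows "ennreal (a*(a/(D+\<epsilon>*a))) \<le> ennreal (lam/(2*\<epsilon>)) * (ennreal a * (ennreal a / ennreal m)) + ennreal (1/(2*lam*\<epsilon>)) * ennreal m"
proof (cases "a = 0")
  case True thus ?thesis by simp
next
  case False
  hence a: "a > 0" using a by simp
  have r1: "a*(a/(D+\<epsilon>*a)) \<le> a/\<epsilon>"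
  proof -
    have "a/(D+\<epsilon>*a) \<le> a/(\<epsilon>*a)" using a e D by (intro divide_left_mono) (auto simp: add_nonneg_pos)
    hence "a*(a/(D+\<epsilon>*a)) \<le> a*(a/(\<epsilon>*a))" using a by (intro mult_left_mono) auto
    thus ?thesis using a by simp
  qed
  show ?thesis
  proof (cases "m = 0")
    case True
    have "ennreal a / ennreal m = top" using True a by (simp add: divide_ennreal_def)
    thus ?thesis using a l e by (simp add: ennreal_mult_top)
  next
    case False
    hence m: "m > 0" using m by simp
    have "a \<le> lam/2*(a*(a/m)) + m/(2*lam)"
    proof -
      have "0 \<le> (lam*a - m)^2/(2*lam*m)" using l m by simp
      also have "(lam*a - m)^2/(2*lam*m) = lam/2*(a*(a/m)) + m/(2*lam) - a"
        using l m by (simp add: field_simps power2_eq_square)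
      finally show ?thesis by simp
    qed
    hence "a/\<epsilon> \<le> (lam/2*(a*(a/m)) + m/(2*lam))/\<epsilon>" using e by (intro divide_right_mono) auto
    also have "\<dots> = lam/(2*\<epsilon>) * (a*(a/m)) + 1/(2*lam*\<epsilon>) * m" using e l m by (simp add: field_simps)
    finally have "a*(a/(D+\<epsilon>*a)) \<le> lam/(2*\<epsilon>) * (a*(a/m)) + 1/(2*lam*\<epsilon>) * m" using r1 by linarith
    hence "ennreal (a*(a/(D+\<epsilon>*a))) \<le> ennreal (lam/(2*\<epsilon>) * (a*(a/m)) + 1/(2*lam*\<epsilon>) * m)"
      by (rule ennreal_leI)
    also have "\<dots> = ennreal (lam/(2*\<epsilon>)) * (ennreal a * (ennreal a / ennreal m)) + ennreal (1/(2*lam*\<epsilon>)) * ennreal m"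
      using a m l e by (simp add: ennreal_mult[symmetric] divide_ennreal ennreal_plus[symmetric] del: ennreal_plus)
    finally show ?thesis .
  qed
qed



lemma cover:
  fixes dd :: "'p \<Rightarrow> 'z pmf" and \<mu> :: "'z pmf" and Pols :: "'p set" and \<epsilon> C :: real
  assumes ne: "Pols \<noteq> {}" and e: "\<epsilon> > 0" and Cpos: "C > 0"
    and hyp: "\<And>\<pi>. \<pi> \<in> Pols \<Longrightarrow> (\<integral>\<^sup>+ z. ennreal (pmf (dd \<pi>) z) / ennreal (pmf \<mu> z) \<partial>measure_pmf (dd \<pi>)) \<le> ennreal C"
  shows "\<exists>p. set_pmf p \<subseteq> Pols \<and> (\<forall>\<pi>\<in>Pols. (\<integral>\<^sup>+ z. ennreal (pmf (dd \<pi>) z / (pmf (bind_pmf p dd) z + \<epsilon> * pmf (dd \<pi>) z)) \<partial>measure_pmf (dd \<pi>)) \<le> ennreal (sqrt (3*C/\<epsilon>) + 2/3))"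
proof -
  define \<tau> where "\<tau> = \<epsilon>^2/(9*C)"
  have tau: "\<tau> > 0" unfolding \<tau>_def using e Cpos by (intro divide_pos_pos) auto
  obtain Z0 where Z0: "finite Z0" "Z0 \<subseteq> set_pmf \<mu>" "measure_pmf.prob \<mu> (-Z0) \<le> \<tau>"
    using finite_approx_pmf[OF tau, of \<mu>] by auto
  define \<theta> where "\<theta> = \<epsilon>^2/3"
  have th: "\<theta> > 0" unfolding \<theta>_def using e by (intro divide_pos_pos) auto
  define \<eta> where "\<eta> = min \<epsilon> (1/2)"
  have eta: "0 < \<eta>" "\<eta> \<le> 1/2" "\<eta> \<le> \<epsilon>" using e by (auto simp: \<eta>_def)
  define m where "m = pmf \<mu>"
  have mpos: "\<And>z. z \<in> Z0 \<Longrightarrow> m z > 0" using Z0(2) by (auto simp: m_def pmf_positive)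
  have m0: "\<And>z. m z \<ge> 0" by (simp add: m_def)
  have msum: "(\<Sum>z\<in>Z0. m z) \<le> 1"
    using measure_measure_pmf_finite[OF Z0(1), of \<mu>] measure_pmf.prob_le_1[of \<mu> Z0] by (simp add: m_def)
  define \<Phi> where "\<Phi> p = (\<Sum>z\<in>Z0. m z * ln (pmf (bind_pmf p dd) z + \<theta> * m z))" for p
  define g where "g p \<pi> = (\<Sum>z\<in>Z0. m z * (pmf (dd \<pi>) z / (pmf (bind_pmf p dd) z + \<theta> * m z + \<epsilon> * pmf (dd \<pi>) z)))" for p \<pi>
  define PS where "PS = {p. set_pmf p \<subseteq> Pols}"
  have step: "\<exists>p'\<in>PS. \<Phi> p' \<ge> \<Phi> p - 2*\<eta> + \<eta> * g p \<pi>" if p: "p \<in> PS" and pi: "\<pi> \<in> Pols" for p \<pi>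
  proof -
    define p' where "p' = bind_pmf (bernoulli_pmf \<eta>) (\<lambda>b. if b then return_pmf \<pi> else p)"
    have p'PS: "p' \<in> PS" using p pi eta unfolding p'_def PS_def by (auto split: if_splits)
    have D': "pmf (bind_pmf p' dd) z = (1-\<eta>) * pmf (bind_pmf p dd) z + \<eta> * pmf (dd \<pi>) z" for z
    proof -
      have "bind_pmf p' dd = bind_pmf (bernoulli_pmf \<eta>) (\<lambda>b. if b then dd \<pi> else bind_pmf p dd)"
        unfolding p'_def bind_assoc_pmf by (intro bind_pmf_cong) (auto simp: bind_return_pmf)
      thus ?thesis using eta by (simp add: pmf_bind algebra_simps)
    qed
    have "\<Phi> p' - \<Phi> p = (\<Sum>z\<in>Z0. m z * (ln ((1-\<eta>) * pmf (bind_pmf p dd) z + \<eta> * pmf (dd \<pi>) z + \<theta> * m z) - ln (pmf (bind_pmf p dd) z + \<theta> * m z)))"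
      unfolding \<Phi>_def D' by (simp add: sum_subtractf right_diff_distrib)
    also have "\<dots> \<ge> (\<Sum>z\<in>Z0. m z * (-2*\<eta> + \<eta> * pmf (dd \<pi>) z / (pmf (bind_pmf p dd) z + \<theta> * m z + \<epsilon> * pmf (dd \<pi>) z)))"
    proof (intro sum_mono mult_left_mono)
      fix z assume z: "z \<in> Z0"
      show "-2*\<eta> + \<eta> * pmf (dd \<pi>) z / (pmf (bind_pmf p dd) z + \<theta> * m z + \<epsilon> * pmf (dd \<pi>) z)
          \<le> ln ((1-\<eta>) * pmf (bind_pmf p dd) z + \<eta> * pmf (dd \<pi>) z + \<theta> * m z) - ln (pmf (bind_pmf p dd) z + \<theta> * m z)"
        using step_real[of "pmf (bind_pmf p dd) z" "pmf (dd \<pi>) z" "\<theta> * m z" \<eta> \<epsilon>] eta th mpos[OF z] by simp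
      show "0 \<le> m z" by (rule m0)
    qed
    also have "(\<Sum>z\<in>Z0. m z * (-2*\<eta> + \<eta> * pmf (dd \<pi>) z / (pmf (bind_pmf p dd) z + \<theta> * m z + \<epsilon> * pmf (dd \<pi>) z)))
        = -2*\<eta> * (\<Sum>z\<in>Z0. m z) + \<eta> * g p \<pi>"
    proof -
      have "(\<Sum>z\<in>Z0. m z * (-2*\<eta> + \<eta> * pmf (dd \<pi>) z / (pmf (bind_pmf p dd) z + \<theta> * m z + \<epsilon> * pmf (dd \<pi>) z)))
          = (\<Sum>z\<in>Z0. (-2*\<eta>) * m z + \<eta> * (m z * (pmf (dd \<pi>) z / (pmf (bind_pmf p dd) z + \<theta> * m z + \<epsilon> * pmf (dd \<pi>) z))))"
        by (intro sum.cong) (auto simp: algebra_simps)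
      also have "\<dots> = -2*\<eta> * (\<Sum>z\<in>Z0. m z) + \<eta> * g p \<pi>"
        unfolding g_def by (simp only: sum.distrib sum_distrib_left[symmetric])
      finally show ?thesis .
    qed
    also have "\<dots> \<ge> -2*\<eta> + \<eta> * g p \<pi>" using msum eta by simp
    finally show ?thesis using p'PS by (intro bexI[of _ p']) auto
  qed
  obtain \<pi>0 where pi0: "\<pi>0 \<in> Pols" using ne by blast
  have neS: "\<Phi> ` PS \<noteq> {}" using pi0 unfolding PS_def by (auto intro!: exI[of _ "return_pmf \<pi>0"])
  have bdd: "bdd_above (\<Phi> ` PS)"
  proof (rule bdd_aboveI)
    fix x assume "x \<in> \<Phi> ` PS"
    then obtain p where x: "x = \<Phi> p" by blast
    have "\<Phi> p \<le> (\<Sum>z\<in>Z0. 1 + \<theta>)" unfolding \<Phi>_def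
    proof (intro sum_mono)
      fix z assume z: "z \<in> Z0"
      define X where "X = pmf (bind_pmf p dd) z + \<theta> * m z"
      have X0: "X > 0" using mpos[OF z] th unfolding X_def by (simp add: add_nonneg_pos)
      have "m z \<le> 1" by (simp add: m_def pmf_le_1)
      have X1: "X \<le> 1 + \<theta>" unfolding X_def using \<open>m z \<le> 1\<close> th pmf_le_1[of "bind_pmf p dd" z]
        by (simp add: add_mono mult_left_le)
      have "ln X \<le> X - 1" using X0 by (rule ln_le_minus_one)
      hence "m z * ln X \<le> m z * X" using m0[of z] by (intro mult_left_mono) auto
      also have "\<dots> \<le> 1 * X" using \<open>m z \<le> 1\<close> X0 by (intro mult_right_mono) auto
      finally show "m z * ln X \<le> 1 + \<theta>" using X1 by simp
    qed
    thus "x \<le> (\<Sum>z\<in>Z0. 1 + \<theta>)" using x by simp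
  qed
  obtain p where p: "p \<in> PS" "\<Phi> p > Sup (\<Phi> ` PS) - \<eta>"
  proof -
    have "Sup (\<Phi> ` PS) - \<eta> < Sup (\<Phi> ` PS)" using eta by simp
    then obtain x where "x \<in> \<Phi> ` PS" "Sup (\<Phi> ` PS) - \<eta> < x" using less_cSup_iff[OF neS bdd] by blast
    thus ?thesis using that by blast
  qed
  have g3: "g p \<pi> \<le> 3" if pi: "\<pi> \<in> Pols" for \<pi>
  proof (rule ccontr)
    assume "\<not> g p \<pi> \<le> 3"
    hence "g p \<pi> > 3" by simp
    obtain p' where p': "p' \<in> PS" "\<Phi> p' \<ge> \<Phi> p - 2*\<eta> + \<eta> * g p \<pi>" using step[OF p(1) pi] by blast
    have "\<eta> * g p \<pi> > \<eta> * 3" using \<open>g p \<pi> > 3\<close> eta by simp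
    hence "\<Phi> p' > Sup (\<Phi> ` PS)" using p'(2) p(2) by linarith
    moreover have "\<Phi> p' \<le> Sup (\<Phi> ` PS)" using p'(1) bdd by (intro cSup_upper) auto
    ultimately show False by simp
  qed
  have final: "(\<integral>\<^sup>+ z. ennreal (pmf (dd \<pi>) z / (pmf (bind_pmf p dd) z + \<epsilon> * pmf (dd \<pi>) z)) \<partial>measure_pmf (dd \<pi>)) \<le> ennreal (sqrt (3*C/\<epsilon>) + 2/3)"
    if pi: "\<pi> \<in> Pols" for \<pi>
  proof -
    define a where "a = pmf (dd \<pi>)"
    define D where "D = pmf (bind_pmf p dd)"
    have a0: "a z \<ge> 0" for z by (simp add: a_def)
    have D0: "D z \<ge> 0" for z by (simp add: D_def)
    define G where "G z = a z * (a z / (D z + \<epsilon> * a z))" for z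
    have G0: "G z \<ge> 0" for z unfolding G_def using a0[of z] D0[of z] e by simp
    define F where "F z = ennreal (a z) * (ennreal (a z) / ennreal (m z))" for z
    have HF: "(\<integral>\<^sup>+ z. F z \<partial>count_space UNIV) \<le> ennreal C"
      using hyp[OF pi] unfolding F_def a_def m_def by (simp add: nn_integral_measure_pmf)
    have L: "(\<integral>\<^sup>+ z. ennreal (pmf (dd \<pi>) z / (pmf (bind_pmf p dd) z + \<epsilon> * pmf (dd \<pi>) z)) \<partial>measure_pmf (dd \<pi>))
        = (\<integral>\<^sup>+ z. ennreal (G z) \<partial>count_space UNIV)"
      unfolding nn_integral_measure_pmf
    proof (intro nn_integral_cong)
      fix z
      show "ennreal (pmf (dd \<pi>) z) * ennreal (pmf (dd \<pi>) z / (pmf (bind_pmf p dd) z + \<epsilon> * pmf (dd \<pi>) z)) = ennreal (G z)"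
        unfolding G_def a_def D_def by (rule ennreal_mult'[symmetric]) simp
    qed
    have split: "(\<integral>\<^sup>+ z. f z \<partial>count_space UNIV) = (\<Sum>z\<in>Z0. f z) + (\<integral>\<^sup>+ z. f z * indicator (-Z0) z \<partial>count_space UNIV)"
      for f :: "'z \<Rightarrow> ennreal"
    proof -
      have "(\<integral>\<^sup>+ z. f z \<partial>count_space UNIV) = (\<integral>\<^sup>+ z. f z * indicator Z0 z + f z * indicator (-Z0) z \<partial>count_space UNIV)"
        by (intro nn_integral_cong) (auto simp: indicator_def)
      also have "\<dots> = (\<integral>\<^sup>+ z. f z * indicator Z0 z \<partial>count_space UNIV) + (\<integral>\<^sup>+ z. f z * indicator (-Z0) z \<partial>count_space UNIV)"
        by (rule nn_integral_add) auto
      also have "(\<integral>\<^sup>+ z. f z * indicator Z0 z \<partial>count_space UNIV) = (\<Sum>z\<in>Z0. f z)"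
        using nn_integral_count_space_indicator[of Z0 f] nn_integral_count_space_finite[OF Z0(1), of f]
        by (cases "Z0 = UNIV") auto
      finally show ?thesis .
    qed
    have SZ: "(\<Sum>z\<in>Z0. a z * (a z / m z)) \<le> C"
    proof -
      have "(\<Sum>z\<in>Z0. F z) \<le> (\<integral>\<^sup>+ z. F z \<partial>count_space UNIV)" using split[of F] by simp
      also have "(\<Sum>z\<in>Z0. F z) = ennreal (\<Sum>z\<in>Z0. a z * (a z / m z))"
      proof -
        have "(\<Sum>z\<in>Z0. F z) = (\<Sum>z\<in>Z0. ennreal (a z * (a z / m z)))"
          by (intro sum.cong) (auto simp: F_def divide_ennreal a0 mpos ennreal_mult'[symmetric] simp del: times_divide_eq_right)
        also have "\<dots> = ennreal (\<Sum>z\<in>Z0. a z * (a z / m z))"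
          by (intro sum_ennreal) (auto simp: a0 m0)
        finally show ?thesis .
      qed
      finally have "ennreal (\<Sum>z\<in>Z0. a z * (a z / m z)) \<le> ennreal C" using HF by (rule order_trans)
      thus ?thesis using Cpos by (simp del: times_divide_eq_right)
    qed
    define sv where "sv = sqrt (3*C/\<epsilon>)"
    have s0: "sv > 0" unfolding sv_def using Cpos e by simp
    have ss: "sv * sv = 3*C/\<epsilon>" unfolding sv_def using Cpos e by simp
    define lam where "lam = sv / C"
    have lam0: "lam > 0" unfolding lam_def using s0 Cpos by simp
    have Zpart: "(\<Sum>z\<in>Z0. G z) \<le> sv + 1/3"
    proof -
      have "(\<Sum>z\<in>Z0. G z) \<le> (\<Sum>z\<in>Z0. lam/2*(a z*(a z/m z)) + m z*(a z/(D z+\<theta>*m z+\<epsilon>*a z))/(2*lam*\<epsilon>) + \<theta>*m z/\<epsilon>^2)"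
        unfolding G_def by (intro sum_mono pw_real a0 D0 mpos th e lam0)
      also have "\<dots> = lam/2*(\<Sum>z\<in>Z0. a z*(a z/m z)) + g p \<pi>/(2*lam*\<epsilon>) + \<theta>/\<epsilon>^2 * (\<Sum>z\<in>Z0. m z)"
        unfolding g_def a_def D_def
        by (simp add: sum.distrib sum_distrib_left sum_divide_distrib mult.commute)
      also have "\<dots> \<le> lam/2*C + 3/(2*lam*\<epsilon>) + \<theta>/\<epsilon>^2 * 1"
        using SZ g3[OF pi] msum lam0 e th
        by (intro add_mono mult_left_mono divide_right_mono) auto
      also have "lam/2*C = sv/2" unfolding lam_def using Cpos by simp
      also have "3/(2*lam*\<epsilon>) = sv/2"
      proof -
        have "3/(2*lam*\<epsilon>) = (3*C/\<epsilon>)/(2* sv)" unfolding lam_def using Cpos e s0 by (simp add: field_simps)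
        also have "\<dots> = sv/2" using ss[symmetric] s0 by simp
        finally show ?thesis .
      qed
      also have "\<theta>/\<epsilon>^2 * 1 = 1/3" unfolding \<theta>_def using e by simp
      finally show ?thesis by simp
    qed
    define lam' where "lam' = \<epsilon>/(3*C)"
    have lam'0: "lam' > 0" unfolding lam'_def using e Cpos by simp
    have Tpart: "(\<integral>\<^sup>+ z. ennreal (G z) * indicator (-Z0) z \<partial>count_space UNIV) \<le> ennreal (1/3)"
    proof -
      have "(\<integral>\<^sup>+ z. ennreal (G z) * indicator (-Z0) z \<partial>count_space UNIV)
          \<le> (\<integral>\<^sup>+ z. ennreal (lam'/(2*\<epsilon>)) * F z + ennreal (1/(2*lam'*\<epsilon>)) * (ennreal (m z) * indicator (-Z0) z) \<partial>count_space UNIV)"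
      proof (intro nn_integral_mono)
        fix z
        show "ennreal (G z) * indicator (-Z0) z \<le> ennreal (lam'/(2*\<epsilon>)) * F z + ennreal (1/(2*lam'*\<epsilon>)) * (ennreal (m z) * indicator (-Z0) z)"
        proof (cases "z \<in> Z0")
          case True thus ?thesis by simp
        next
          case False
          thus ?thesis using pw_tail[OF a0 D0 m0 e lam'0, of z z z] unfolding G_def F_def by simp
        qed
      qed
      also have "\<dots> = ennreal (lam'/(2*\<epsilon>)) * (\<integral>\<^sup>+ z. F z \<partial>count_space UNIV) + ennreal (1/(2*lam'*\<epsilon>)) * (\<integral>\<^sup>+ z. ennreal (m z) * indicator (-Z0) z \<partial>count_space UNIV)"
        by (simp add: nn_integral_add nn_integral_cmult)
      also have "(\<integral>\<^sup>+ z. ennreal (m z) * indicator (-Z0) z \<partial>count_space UNIV) = emeasure (measure_pmf \<mu>) (-Z0)"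
        using nn_integral_count_space_indicator[of "-Z0" "\<lambda>z. ennreal (m z)"] nn_integral_pmf[where p=\<mu> and A="-Z0"]
        by (cases "-Z0 = UNIV") (auto simp: m_def)
      also have "\<dots> \<le> ennreal \<tau>" using Z0(3) by (simp add: measure_pmf.emeasure_eq_measure ennreal_leI)
      finally have "(\<integral>\<^sup>+ z. ennreal (G z) * indicator (-Z0) z \<partial>count_space UNIV) \<le> ennreal (lam'/(2*\<epsilon>)) * ennreal C + ennreal (1/(2*lam'*\<epsilon>)) * ennreal \<tau>"
        using HF by (meson add_mono dual_order.trans mult_left_mono order_refl zero_le)
      also have "\<dots> = ennreal (lam'/(2*\<epsilon>) * C + 1/(2*lam'*\<epsilon>) * \<tau>)"
        using lam'0 e Cpos tau by (simp add: ennreal_mult[symmetric] ennreal_plus[symmetric] del: ennreal_plus)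
      also have "lam'/(2*\<epsilon>) * C + 1/(2*lam'*\<epsilon>) * \<tau> = 1/3"
        unfolding lam'_def \<tau>_def using e Cpos by (simp add: field_simps power2_eq_square)
      finally show ?thesis .
    qed
    have "(\<integral>\<^sup>+ z. ennreal (G z) \<partial>count_space UNIV) \<le> ennreal (sv + 1/3) + ennreal (1/3)"
      unfolding split[of "\<lambda>z. ennreal (G z)"] using Zpart Tpart G0
      by (intro add_mono) (auto simp: sum_ennreal ennreal_leI)
    also have "\<dots> = ennreal (sv + 2/3)" using s0 by (simp add: ennreal_plus[symmetric] del: ennreal_plus)
    finally show ?thesis unfolding L sv_def .
  qed
  show ?thesis using p(1) final unfolding PS_def by blast
qed



lemma pmf_bind_Pair:
  "pmf (bind_pmf S (\<lambda>x. map_pmf (\<lambda>a. (x,a)) (K x))) (x,a) = pmf S x * pmf (K x) a"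
proof -
  have eq: "pmf (map_pmf (\<lambda>a. (y,a)) (K y)) (x,a) = indicator {x} y * pmf (K x) a" for y
  proof (cases "y = x")
    case True
    have "inj (\<lambda>a. (x, a))" by (auto simp: inj_on_def)
    thus ?thesis using True pmf_map_inj'[of "\<lambda>a. (x,a)" "K x" a] by simp
  next
    case False
    hence "(x,a) \<notin> set_pmf (map_pmf (\<lambda>a. (y,a)) (K y))" by auto
    thus ?thesis using False by (metis set_pmf_iff indicator_simps(2) mult_zero_left singletonD)
  qed
  have "pmf (bind_pmf S (\<lambda>x. map_pmf (\<lambda>a. (x,a)) (K x))) (x,a) = (\<integral>y. indicator {x} y * pmf (K x) a \<partial>measure_pmf S)"
    unfolding pmf_bind eq ..
  also have "\<dots> = measure (measure_pmf S) {x} * pmf (K x) a" by simp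
  also have "\<dots> = pmf S x * pmf (K x) a" by (simp add: measure_pmf_single)
  finally show ?thesis .
qed

lemma pmf_occ: "pmf (occ \<rho> P \<pi> h) (x,a) = pmf (state_dist \<rho> P \<pi> h) x * pmf (\<pi> h x) a"
  unfolding occ_def by (rule pmf_bind_Pair)

lemma state_dist_Suc:
  assumes "k \<ge> 1"
  shows "state_dist \<rho> P \<pi> (Suc k) = bind_pmf (occ \<rho> P \<pi> k) (\<lambda>z. P k (fst z) (snd z))"
proof -
  obtain j where k: "k = Suc j" using assms by (cases k) auto
  show ?thesis unfolding k occ_def by (simp add: bind_assoc_pmf bind_map_pmf)
qed

lemma quad_lin:
  fixes f :: "'z \<Rightarrow> real^'d" and u y :: "real^'d"
  assumes int: "integrable M (\<lambda>z. (\<chi> i j. f z $ i * f z $ j) :: real^'d^'d)"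
  shows "integrable M (\<lambda>z. (f z \<bullet> u) * (f z \<bullet> y))"
    and "(integral\<^sup>L M (\<lambda>z. (\<chi> i j. f z $ i * f z $ j) :: real^'d^'d) *v u) \<bullet> y = (\<integral>z. (f z \<bullet> u) * (f z \<bullet> y) \<partial>M)"
proof -
  define T where "T A = (A *v u) \<bullet> y" for A :: "real^'d^'d"
  have lin: "linear T" unfolding T_def
    by (rule linearI) (simp_all add: matrix_vector_mult_add_rdistrib inner_add_left scaleR_matrix_vector_assoc[symmetric])
  hence bl: "bounded_linear T" by (simp add: linear_conv_bounded_linear)
  have TM: "T (\<chi> i j. f z $ i * f z $ j) = (f z \<bullet> u) * (f z \<bullet> y)" for z
  proof -
    have "T (\<chi> i j. f z $ i * f z $ j) = (\<Sum>i\<in>UNIV. (\<Sum>j\<in>UNIV. f z $ i * f z $ j * u $ j) * y $ i)"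
      unfolding T_def by (simp add: matrix_vector_mult_def inner_vec_def mult.commute)
    also have "\<dots> = (\<Sum>i\<in>UNIV. (\<Sum>j\<in>UNIV. f z $ j * u $ j) * (f z $ i * y $ i))"
      by (intro sum.cong refl) (simp add: sum_distrib_left sum_distrib_right algebra_simps)
    also have "\<dots> = (f z \<bullet> u) * (f z \<bullet> y)"
      by (simp add: inner_vec_def sum_distrib_left)
    finally show ?thesis .
  qed
  show "integrable M (\<lambda>z. (f z \<bullet> u) * (f z \<bullet> y))"
    using integrable_bounded_linear[OF bl int] unfolding TM .
  show "(integral\<^sup>L M (\<lambda>z. (\<chi> i j. f z $ i * f z $ j) :: real^'d^'d) *v u) \<bullet> y = (\<integral>z. (f z \<bullet> u) * (f z \<bullet> y) \<partial>M)"
  proof -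
    have "T (integral\<^sup>L M (\<lambda>z. (\<chi> i j. f z $ i * f z $ j) :: real^'d^'d)) = (\<integral>z. T (\<chi> i j. f z $ i * f z $ j) \<partial>M)"
      using integral_bounded_linear[OF bl int] by simp
    thus ?thesis unfolding TM by (simp add: T_def)
  qed
qed



lemma le_cmult_INF:
  fixes c x :: ennreal
  assumes c: "c \<noteq> 0" "c \<noteq> top" and le: "\<And>i. i \<in> I \<Longrightarrow> x \<le> c * f i"
  shows "x \<le> c * (INF i\<in>I. f i)"
proof -
  have "x / c \<le> (INF i\<in>I. f i)"
  proof (rule INF_greatest)
    fix i assume "i \<in> I"
    hence "x / c \<le> (f i * c) / c" using le[of i] by (intro divide_right_mono_ennreal) (simp add: mult.commute)
    thus "x / c \<le> f i" using c by (simp add: mult_divide_eq_ennreal)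
  qed
  hence "(x / c) * c \<le> (INF i\<in>I. f i) * c" by (rule mult_right_mono) simp
  moreover have "(x / c) * c = x" using c by (simp add: ennreal_divide_times ennreal_divide_self top.not_eq_extremum)
  ultimately show ?thesis by (simp add: mult.commute)
qed

lemma cs_weighted:
  fixes w Q :: "'z \<Rightarrow> real"
  assumes Q0: "\<And>z. Q z \<ge> 0" and i1: "integrable M (\<lambda>z. w z^2 * Q z)" and i2: "integrable M (\<lambda>z. w z * Q z)"
    and i3: "integrable M Q"
  shows "(\<integral>z. w z * Q z \<partial>M)^2 \<le> (\<integral>z. w z^2 * Q z \<partial>M) * (\<integral>z. Q z \<partial>M)"
proof -
  define A where "A = (\<integral>z. w z^2 * Q z \<partial>M)"
  define E where "E = (\<integral>z. w z * Q z \<partial>M)"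
  define B where "B = (\<integral>z. Q z \<partial>M)"
  have quad: "0 \<le> A - 2*t*E + t^2*B" for t
  proof -
    have "0 \<le> (\<integral>z. (w z - t)^2 * Q z \<partial>M)" using Q0 by (intro integral_nonneg_AE) auto
    also have "(\<lambda>z. (w z - t)^2 * Q z) = (\<lambda>z. w z^2 * Q z - (2*t) * (w z * Q z) + t^2 * Q z)"
      by (auto simp: power2_eq_square algebra_simps)
    also have "(\<integral>z. w z^2 * Q z - (2*t) * (w z * Q z) + t^2 * Q z \<partial>M) = A - 2*t*E + t^2*B"
      unfolding A_def E_def B_def using i1 i2 i3 by (simp add: integral_add integral_diff)
    finally show ?thesis .
  qed
  have B0: "B \<ge> 0" unfolding B_def using Q0 by (intro integral_nonneg_AE) auto
  show ?thesis
  proof (cases "B = 0")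
    case True
    have "E = 0"
    proof (rule ccontr)
      assume "E \<noteq> 0"
      have "0 \<le> A - 2*((A+1)/(2*E))*E" using quad[of "(A+1)/(2*E)"] True by simp
      also have "\<dots> = -1" using \<open>E \<noteq> 0\<close> by (simp add: field_simps)
      finally show False by simp
    qed
    thus ?thesis unfolding A_def E_def B_def[symmetric] using True by simp
  next
    case False
    hence Bp: "B > 0" using B0 by simp
    have "0 \<le> A - 2*(E/B)*E + (E/B)^2*B" by (rule quad)
    also have "\<dots> = A - E^2/B" using Bp by (simp add: field_simps power2_eq_square)
    finally have "E^2/B \<le> A" by simp
    hence "E^2 \<le> A * B" using Bp by (simp add: field_simps)
    thus ?thesis unfolding A_def E_def B_def .
  qed
qed



lemma part1_pi:
  fixes \<rho> :: "'x::countable pmf" and P :: "nat \<Rightarrow> 'x \<Rightarrow> 'a::finite \<Rightarrow> 'x pmf"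
    and \<phi> :: "nat \<Rightarrow> 'x \<Rightarrow> 'a \<Rightarrow> real^'d" and \<psi> :: "nat \<Rightarrow> 'x \<Rightarrow> real^'d"
    and \<nu> :: "('x \<times> 'a) pmf" and \<pi> :: "('x,'a) policy"
  assumes lr: "\<And>x a x'. pmf (P k x a) x' = \<phi> k x a \<bullet> \<psi> (Suc k) x'" and k: "k \<ge> 1"
    and ok: "feat_cov_ok \<nu> (\<phi> k)"
    and \<mu>_def: "\<mu> = bind_pmf (bind_pmf \<nu> (\<lambda>z. P k (fst z) (snd z))) (\<lambda>x. map_pmf (\<lambda>a. (x,a)) (pmf_of_set UNIV))"
  shows "(\<integral>\<^sup>+ z. ennreal (pmf (occ \<rho> P \<pi> (Suc k)) z) / ennreal (pmf \<mu> z) \<partial>measure_pmf (occ \<rho> P \<pi> (Suc k)))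
          \<le> ennreal (real (card (UNIV::'a set))) * feat_norm \<rho> P \<phi> k \<nu> \<pi>"
proof (cases "integrable (measure_pmf (occ \<rho> P \<pi> k)) (\<lambda>z. \<phi> k (fst z) (snd z))")
  case False
  have "card (UNIV::'a set) > 0" by (simp add: finite_UNIV_card_ge_0)
  thus ?thesis using False by (simp add: feat_norm_def)
next
  case int: True
  define N where "N = real (card (UNIV::'a set))"
  have N0: "N > 0" unfolding N_def by (simp add: finite_UNIV_card_ge_0)
  define f where "f z = \<phi> k (fst z) (snd z)" for z
  define Sig where "Sig = feat_cov \<nu> (\<phi> k)"
  have iM: "integrable (measure_pmf \<nu>) (\<lambda>z. (\<chi> i j. f z $ i * f z $ j) :: real^'d^'d)"
    using ok unfolding feat_cov_ok_def f_def by simp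
  have Sig_eq: "Sig = integral\<^sup>L (measure_pmf \<nu>) (\<lambda>z. (\<chi> i j. f z $ i * f z $ j) :: real^'d^'d)"
    unfolding Sig_def feat_cov_def f_def ..
  have inv: "invertible Sig" using ok unfolding feat_cov_ok_def Sig_def by simp
  have SigInv: "Sig ** matrix_inv Sig = mat 1"
    using inv unfolding invertible_def matrix_inv_def by (rule someI_ex[where P="\<lambda>A'. Sig ** A' = mat 1 \<and> A' ** Sig = mat 1", THEN conjunct1])
  define v where "v = (\<integral>z. f z \<partial>measure_pmf (occ \<rho> P \<pi> k))"
  define u where "u = matrix_inv Sig *v v"
  have Sigu: "Sig *v u = v" unfolding u_def matrix_vector_mul_assoc SigInv by simp
  define S where "S x = pmf (state_dist \<rho> P \<pi> (Suc k)) x" for x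
  define SN where "SN x = pmf (bind_pmf \<nu> (\<lambda>z. P k (fst z) (snd z))) x" for x
  define w where "w z = f z \<bullet> u" for z
  define Q where "Q x z = pmf (P k (fst z) (snd z)) x" for x z
  have Qeq: "Q x z = f z \<bullet> \<psi> (Suc k) x" for x z unfolding Q_def f_def by (simp add: lr)
  have Q0: "Q x z \<ge> 0" for x z unfolding Q_def by simp
  have Q1: "Q x z \<le> 1" for x z unfolding Q_def by (simp add: pmf_le_1)
  have iwQ: "integrable (measure_pmf \<nu>) (\<lambda>z. w z * Q x z)" for x
    unfolding w_def Qeq by (rule quad_lin(1)[OF iM])
  have iww: "integrable (measure_pmf \<nu>) (\<lambda>z. w z * w z)"
    unfolding w_def by (rule quad_lin(1)[OF iM])
  have iQ: "integrable (measure_pmf \<nu>) (Q x)" for x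
    by (rule measure_pmf.integrable_const_bound[where B=1]) (auto simp: Q0 Q1)
  have iw2Q: "integrable (measure_pmf \<nu>) (\<lambda>z. (w z)^2 * Q x z)" for x
  proof (rule Bochner_Integration.integrable_bound[OF iww])
    show "(\<lambda>z. (w z)^2 * Q x z) \<in> borel_measurable (measure_pmf \<nu>)" by simp
    show "AE z in measure_pmf \<nu>. norm ((w z)^2 * Q x z) \<le> norm (w z * w z)"
      using Q0 Q1 by (auto simp: abs_mult power2_eq_square intro!: mult_left_le)
  qed
  have S_eq: "S x = (\<integral>z. w z * Q x z \<partial>measure_pmf \<nu>)" for x
  proof -
    have "S x = (\<integral>z. Q x z \<partial>measure_pmf (occ \<rho> P \<pi> k))"
      unfolding S_def state_dist_Suc[OF k] pmf_bind Q_def ..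
    also have "\<dots> = (\<integral>z. f z \<bullet> \<psi> (Suc k) x \<partial>measure_pmf (occ \<rho> P \<pi> k))" unfolding Qeq ..
    also have "\<dots> = v \<bullet> \<psi> (Suc k) x" unfolding v_def f_def using int by simp
    also have "\<dots> = (Sig *v u) \<bullet> \<psi> (Suc k) x" using Sigu by simp
    also have "\<dots> = (\<integral>z. w z * Q x z \<partial>measure_pmf \<nu>)"
      unfolding Sig_eq quad_lin(2)[OF iM] w_def Qeq ..
    finally show ?thesis .
  qed
  have SN_eq: "SN x = (\<integral>z. Q x z \<partial>measure_pmf \<nu>)" for x
    unfolding SN_def pmf_bind Q_def ..
  define A where "A x = (\<integral>z. (w z)^2 * Q x z \<partial>measure_pmf \<nu>)" for x
  have CS: "(S x)^2 \<le> A x * SN x" for x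
    unfolding S_eq SN_eq A_def by (rule cs_weighted[OF Q0 iw2Q iwQ iQ])
  have S0: "S x \<ge> 0" for x unfolding S_def by simp
  have SN0: "SN x \<ge> 0" for x unfolding SN_def by simp
  have A0: "A x \<ge> 0" for x unfolding A_def using Q0 by (intro integral_nonneg_AE) auto
  have SNz: "SN x = 0 \<Longrightarrow> S x = 0" for x using CS[of x] by simp
  have key: "ennreal (S x) * (ennreal (S x) / ennreal (SN x)) \<le> ennreal (A x)" for x
  proof (cases "SN x = 0")
    case True thus ?thesis using SNz by simp
  next
    case False
    hence p: "SN x > 0" using SN0[of x] by simp
    have "S x * (S x / SN x) \<le> A x" using CS[of x] p by (simp add: field_simps power2_eq_square)
    thus ?thesis using p S0[of x] by (simp add: divide_ennreal ennreal_mult'[symmetric] ennreal_leI del: times_divide_eq_right)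
  qed
  have intw2: "(\<integral>z. (w z)^2 \<partial>measure_pmf \<nu>) = v \<bullet> u"
  proof -
    have "(\<integral>z. (w z)^2 \<partial>measure_pmf \<nu>) = (\<integral>z. w z * w z \<partial>measure_pmf \<nu>)" by (simp add: power2_eq_square)
    also have "\<dots> = (Sig *v u) \<bullet> u" unfolding Sig_eq quad_lin(2)[OF iM] w_def ..
    finally show ?thesis using Sigu by simp
  qed
  have sumA: "(\<integral>\<^sup>+ x. ennreal (A x) \<partial>count_space UNIV) = ennreal (v \<bullet> u)"
  proof -
    have "(\<integral>\<^sup>+ x. ennreal (A x) \<partial>count_space UNIV) = (\<integral>\<^sup>+ x. \<integral>\<^sup>+ z. ennreal ((w z)^2 * Q x z) \<partial>measure_pmf \<nu> \<partial>count_space UNIV)"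
      unfolding A_def using iw2Q Q0 by (intro nn_integral_cong nn_integral_eq_integral[symmetric]) auto
    also have "\<dots> = (\<integral>\<^sup>+ z. \<integral>\<^sup>+ x. ennreal ((w z)^2 * Q x z) \<partial>count_space UNIV \<partial>measure_pmf \<nu>)"
      by (rule nn_integral_count_space_nn_integral[symmetric]) auto
    also have "\<dots> = (\<integral>\<^sup>+ z. ennreal ((w z)^2) \<partial>measure_pmf \<nu>)"
    proof (intro nn_integral_cong)
      fix z
      have "(\<integral>\<^sup>+ x. ennreal ((w z)^2 * Q x z) \<partial>count_space UNIV) = ennreal ((w z)^2) * (\<integral>\<^sup>+ x. ennreal (Q x z) \<partial>count_space UNIV)"
        by (simp add: ennreal_mult nn_integral_cmult Q0)
      also have "(\<integral>\<^sup>+ x. ennreal (Q x z) \<partial>count_space UNIV) = 1"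
        unfolding Q_def nn_integral_pmf by (simp add: measure_pmf.emeasure_space_1[simplified])
      finally show "(\<integral>\<^sup>+ x. ennreal ((w z)^2 * Q x z) \<partial>count_space UNIV) = ennreal ((w z)^2)" by simp
    qed
    also have "\<dots> = ennreal (\<integral>z. (w z)^2 \<partial>measure_pmf \<nu>)"
      using iww by (intro nn_integral_eq_integral) (auto simp: power2_eq_square)
    finally show ?thesis using intw2 by simp
  qed
  have fn: "feat_norm \<rho> P \<phi> k \<nu> \<pi> = ennreal (v \<bullet> u)"
    using int unfolding feat_norm_def u_def v_def Sig_def f_def by (simp add: Let_def)
  define F where "F z = ennreal (pmf (occ \<rho> P \<pi> (Suc k)) z) / ennreal (pmf \<mu> z)" for z
  have pmf_mu: "pmf \<mu> (x,a) = SN x * (1/N)" for x a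
    unfolding \<mu>_def SN_def N_def pmf_bind_Pair by simp
  have Fle: "F (x,a) \<le> ennreal N * (ennreal (S x) / ennreal (SN x))" for x a
  proof (cases "SN x = 0")
    case True thus ?thesis using SNz[OF True] unfolding F_def pmf_occ S_def[symmetric] by simp
  next
    case False
    hence p: "SN x > 0" using SN0[of x] by simp
    have pa: "pmf (\<pi> (Suc k) x) a \<le> 1" by (simp add: pmf_le_1)
    have "S x * pmf (\<pi> (Suc k) x) a / (SN x * (1/N)) \<le> N * (S x / SN x)"
      using p N0 S0[of x] pa by (simp add: field_simps mult_left_le)
    hence "ennreal (S x * pmf (\<pi> (Suc k) x) a / (SN x * (1/N))) \<le> ennreal (N * (S x / SN x))" by (rule ennreal_leI)
    thus ?thesis unfolding F_def pmf_occ S_def[symmetric] pmf_mu using p N0 S0[of x]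
      by (simp add: divide_ennreal ennreal_mult'[symmetric] del: times_divide_eq_right)
  qed
  have "(\<integral>\<^sup>+ z. F z \<partial>measure_pmf (occ \<rho> P \<pi> (Suc k))) = (\<integral>\<^sup>+ x. \<integral>\<^sup>+ a. F (x,a) \<partial>measure_pmf (\<pi> (Suc k) x) \<partial>measure_pmf (state_dist \<rho> P \<pi> (Suc k)))"
    by (simp add: occ_def[of \<rho> P \<pi> "Suc k"])
  also have "\<dots> \<le> (\<integral>\<^sup>+ x. \<integral>\<^sup>+ a. ennreal N * (ennreal (S x) / ennreal (SN x)) \<partial>measure_pmf (\<pi> (Suc k) x) \<partial>measure_pmf (state_dist \<rho> P \<pi> (Suc k)))"
    by (intro nn_integral_mono Fle)
  also have "\<dots> = (\<integral>\<^sup>+ x. ennreal N * (ennreal (S x) / ennreal (SN x)) \<partial>measure_pmf (state_dist \<rho> P \<pi> (Suc k)))"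
    by (simp add: measure_pmf.emeasure_space_1[simplified])
  also have "\<dots> = ennreal N * (\<integral>\<^sup>+ x. ennreal (S x) * (ennreal (S x) / ennreal (SN x)) \<partial>count_space UNIV)"
    by (simp add: nn_integral_cmult nn_integral_measure_pmf S_def mult.assoc mult.left_commute)
  also have "\<dots> \<le> ennreal N * (\<integral>\<^sup>+ x. ennreal (A x) \<partial>count_space UNIV)"
    by (intro mult_left_mono nn_integral_mono key) auto
  also have "\<dots> = ennreal N * feat_norm \<rho> P \<phi> k \<nu> \<pi>" using sumA fn by simp
  finally show ?thesis unfolding F_def N_def .
qed



lemma part1:
  fixes \<rho> :: "'x::countable pmf"
    and P :: "nat \<Rightarrow> 'x \<Rightarrow> 'a::finite \<Rightarrow> 'x pmf"
    and \<phi> :: "nat \<Rightarrow> 'x \<Rightarrow> 'a \<Rightarrow> real^'d"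
    and \<psi> :: "nat \<Rightarrow> 'x \<Rightarrow> real^'d"
    and Pols :: "('x,'a) policy set"
  assumes low_rank: "\<And>h x a x'. 1 \<le> h \<Longrightarrow> h < H \<Longrightarrow> pmf (P h x a) x' = \<phi> h x a \<bullet> \<psi> (Suc h) x'"
    and h: "h \<in> {2..H}"
  shows "C1 \<rho> P Pols h \<le> of_nat (card (UNIV :: 'a set)) * Cfeat \<rho> P Pols \<phi> (h - 1)"
proof -
  define k where "k = h - 1"
  have hk: "h = Suc k" and k1: "k \<ge> 1" and kH: "k < H" using h unfolding k_def by auto
  have lr: "\<And>x a x'. pmf (P k x a) x' = \<phi> k x a \<bullet> \<psi> (Suc k) x'" using low_rank k1 kH by blast
  define c where "c = ennreal (real (card (UNIV :: 'a set)))"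
  have c: "c \<noteq> 0" "c \<noteq> top" unfolding c_def by (auto simp: finite_UNIV_card_ge_0)
  have "C1 \<rho> P Pols h \<le> c * Cfeat \<rho> P Pols \<phi> (h - 1)"
    unfolding Cfeat_def k_def[symmetric]
  proof (rule le_cmult_INF[OF c])
    fix \<nu> assume "\<nu> \<in> {\<nu>. feat_cov_ok \<nu> (\<phi> k)}"
    hence ok: "feat_cov_ok \<nu> (\<phi> k)" by simp
    define \<mu> where "\<mu> = bind_pmf (bind_pmf \<nu> (\<lambda>z. P k (fst z) (snd z))) (\<lambda>x. map_pmf (\<lambda>a. (x,a)) (pmf_of_set (UNIV :: 'a set)))"
    have "C1 \<rho> P Pols h \<le> (SUP \<pi>\<in>Pols. \<integral>\<^sup>+ z. ennreal (pmf (occ \<rho> P \<pi> h) z) / ennreal (pmf \<mu> z) \<partial>measure_pmf (occ \<rho> P \<pi> h))"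
      unfolding C1_def by (rule INF_lower) simp
    also have "\<dots> \<le> c * (SUP \<pi>\<in>Pols. feat_norm \<rho> P \<phi> k \<nu> \<pi>)"
    proof (rule SUP_least)
      fix \<pi> assume pi: "\<pi> \<in> Pols"
      have "(\<integral>\<^sup>+ z. ennreal (pmf (occ \<rho> P \<pi> h) z) / ennreal (pmf \<mu> z) \<partial>measure_pmf (occ \<rho> P \<pi> h))
          \<le> c * feat_norm \<rho> P \<phi> k \<nu> \<pi>"
        unfolding hk c_def by (rule part1_pi[where P=P and k=k and \<phi>=\<phi> and \<psi>=\<psi> and \<nu>=\<nu>, OF lr k1 ok \<mu>_def])
      also have "\<dots> \<le> c * (SUP \<pi>\<in>Pols. feat_norm \<rho> P \<phi> k \<nu> \<pi>)"
        using pi by (intro mult_left_mono SUP_upper) auto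
      finally show "(\<integral>\<^sup>+ z. ennreal (pmf (occ \<rho> P \<pi> h) z) / ennreal (pmf \<mu> z) \<partial>measure_pmf (occ \<rho> P \<pi> h))
          \<le> c * (SUP \<pi>\<in>Pols. feat_norm \<rho> P \<phi> k \<nu> \<pi>)" .
    qed
    finally show "C1 \<rho> P Pols h \<le> c * (SUP \<pi>\<in>Pols. feat_norm \<rho> P \<phi> k \<nu> \<pi>)" .
  qed
  thus ?thesis unfolding c_def by (simp add: ennreal_of_nat_eq_real_of_nat)
qed

lemma final_real:
  fixes X :: real
  assumes "X \<ge> 0"
  shows "sqrt (3*X + 1/9) + 2/3 \<le> 1 + 2 * sqrt X"
proof -
  have sX: "sqrt X * sqrt X = X" "sqrt X \<ge> 0" using assms by simp_all
  have "(2 * sqrt X + 1/3)^2 = 4 * (sqrt X * sqrt X) + 4/3 * sqrt X + 1/9"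
    by (simp add: power2_eq_square algebra_simps)
  hence "3*X + 1/9 \<le> (2 * sqrt X + 1/3)^2" using sX assms by simp
  hence "sqrt (3*X + 1/9) \<le> sqrt ((2 * sqrt X + 1/3)^2)" by (rule real_sqrt_le_mono)
  also have "\<dots> = 2 * sqrt X + 1/3" using assms by simp
  finally show ?thesis by simp
qed

theorem proposition7p2:
  fixes \<rho> :: "'x::countable pmf"
    and P :: "nat \<Rightarrow> 'x \<Rightarrow> 'a::finite \<Rightarrow> 'x pmf"
    and H :: nat
    and \<phi> :: "nat \<Rightarrow> 'x \<Rightarrow> 'a \<Rightarrow> real^'d"
    and \<psi> :: "nat \<Rightarrow> 'x \<Rightarrow> real^'d"
    and Pols :: "('x,'a) policy set"
  assumes low_rank: "\<And>h x a x'. 1 \<le> h \<Longrightarrow> h < H \<Longrightarrow> pmf (P h x a) x' = \<phi> h x a \<bullet> \<psi> (Suc h) x'"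
    and nonempty: "Pols \<noteq> {}"
  shows "\<forall>h\<in>{2..H}.
           C1 \<rho> P Pols h \<le> of_nat (card (UNIV :: 'a set)) * Cfeat \<rho> P Pols \<phi> (h - 1)
         \<and> (\<forall>\<epsilon>>0. Cfeat \<rho> P Pols \<phi> (h - 1) \<noteq> \<top> \<longrightarrow>
              Cov \<rho> P Pols h \<epsilon> \<le> ennreal (1 + 2 * sqrt (real (card (UNIV :: 'a set))
                                        * enn2real (Cfeat \<rho> P Pols \<phi> (h - 1)) / \<epsilon>)))"
proof
  fix h assume h: "h \<in> {2..H}"
  have p1: "C1 \<rho> P Pols h \<le> of_nat (card (UNIV :: 'a set)) * Cfeat \<rho> P Pols \<phi> (h - 1)"
    by (rule part1[where H=H and P=P and \<phi>=\<phi> and \<psi>=\<psi>, OF low_rank h])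
  moreover have "Cov \<rho> P Pols h \<epsilon> \<le> ennreal (1 + 2 * sqrt (real (card (UNIV :: 'a set))
                                        * enn2real (Cfeat \<rho> P Pols \<phi> (h - 1)) / \<epsilon>))"
    if e: "\<epsilon> > 0" and fin: "Cfeat \<rho> P Pols \<phi> (h - 1) \<noteq> \<top>" for \<epsilon>
  proof -
    define C0 where "C0 = real (card (UNIV :: 'a set)) * enn2real (Cfeat \<rho> P Pols \<phi> (h - 1))"
    have C00: "C0 \<ge> 0" unfolding C0_def by simp
    have "of_nat (card (UNIV :: 'a set)) * Cfeat \<rho> P Pols \<phi> (h - 1) = ennreal C0"
      using fin unfolding C0_def
      by (simp add: ennreal_of_nat_eq_real_of_nat ennreal_mult ennreal_enn2real_if)
    with p1 have c1: "C1 \<rho> P Pols h \<le> ennreal C0" by simp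
    define C where "C = C0 + \<epsilon>/27"
    have Cpos: "C > 0" unfolding C_def using C00 e by simp
    have "C1 \<rho> P Pols h < ennreal C" using c1 C00 e unfolding C_def
      by (meson ennreal_lessI le_less_trans less_add_same_cancel1 divide_pos_pos zero_less_numeral order.strict_trans1 add_nonneg_pos)
    then obtain \<mu> where \<mu>: "(SUP \<pi>\<in>Pols. \<integral>\<^sup>+ z. ennreal (pmf (occ \<rho> P \<pi> h) z) / ennreal (pmf \<mu> z) \<partial>measure_pmf (occ \<rho> P \<pi> h)) < ennreal C"
      unfolding C1_def INF_less_iff by blast
    have hyp: "(\<integral>\<^sup>+ z. ennreal (pmf (occ \<rho> P \<pi> h) z) / ennreal (pmf \<mu> z) \<partial>measure_pmf (occ \<rho> P \<pi> h)) \<le> ennreal C"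
      if "\<pi> \<in> Pols" for \<pi>
      by (rule order_trans[OF SUP_upper[OF that] less_imp_le[OF \<mu>]])
    obtain p where p: "set_pmf p \<subseteq> Pols"
      and pb: "\<forall>\<pi>\<in>Pols. (\<integral>\<^sup>+ z. ennreal (pmf (occ \<rho> P \<pi> h) z / (pmf (bind_pmf p (\<lambda>\<pi>. occ \<rho> P \<pi> h)) z + \<epsilon> * pmf (occ \<rho> P \<pi> h) z)) \<partial>measure_pmf (occ \<rho> P \<pi> h)) \<le> ennreal (sqrt (3*C/\<epsilon>) + 2/3)"
      using cover[of Pols \<epsilon> C "\<lambda>\<pi>. occ \<rho> P \<pi> h" \<mu>, OF nonempty e Cpos hyp] by blast
    have "Cov \<rho> P Pols h \<epsilon> \<le> Psi \<rho> P Pols h \<epsilon> p"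
      unfolding Cov_def using p by (intro INF_lower) simp
    also have "\<dots> \<le> ennreal (sqrt (3*C/\<epsilon>) + 2/3)"
      unfolding Psi_def occ_mix_def using pb by (intro SUP_least) auto
    also have "\<dots> \<le> ennreal (1 + 2 * sqrt (C0 / \<epsilon>))"
    proof (rule ennreal_leI)
      have "3*C/\<epsilon> = 3*(C0/\<epsilon>) + 1/9" unfolding C_def using e by (simp add: field_simps)
      thus "sqrt (3*C/\<epsilon>) + 2/3 \<le> 1 + 2 * sqrt (C0 / \<epsilon>)"
        using final_real[of "C0/\<epsilon>"] C00 e by simp
    qed
    finally show ?thesis unfolding C0_def .
  qed
  ultimately show "C1 \<rho> P Pols h \<le> of_nat (card (UNIV :: 'a set)) * Cfeat \<rho> P Pols \<phi> (h - 1)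
         \<and> (\<forall>\<epsilon>>0. Cfeat \<rho> P Pols \<phi> (h - 1) \<noteq> \<top> \<longrightarrow>
              Cov \<rho> P Pols h \<epsilon> \<le> ennreal (1 + 2 * sqrt (real (card (UNIV :: 'a set))
                                        * enn2real (Cfeat \<rho> P Pols \<phi> (h - 1)) / \<epsilon>)))" by blast
qed

end
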